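(* For any $\sigma$-structure $\mathcal{A}$, the $\mathfrak{g}$-guarded tree-width of $\mathcal{A}$ and the $\mathfrak{g}$-guarded coalgebra number of $\mathcal{A}$ coincide.
   Context: $\mathfrak{g}$ is atom or loose guarding (for which the resource-bounded comonads $\mathbb{G}_k^{\mathfrak{g}}$ are defined). $\mathbb{G}_k^{\mathfrak{g}}\mathcal{A}$ has universe the equivalence classes $[p,a]$ of focussed plays $\langle p,a\rangle$, where $p$ is a non-empty list of $k$-guarded $\mathfrak{g}$-guarded sets of $\mathcal{A}$ and $a\in\lambda(p)$ (last element), under $\langle p,a\rangle\sim\langle q,a'\rangle$ iff $a=a'$, $p\sqcap q$ is non-empty, and $a\in\lambda(u)$ for all $u$ on the prefix-order paths from $p\sqcap q$ to $p$ and to $q$; relations $R^{\mathbb{G}_k\mathcal{A}}=\{([p,a_1],\ldots,[p,a_r])\mid R^{\mathcal{A}}(a_1,\ldots,a_r)\}$. A $\mathfrak{g}$-guarded decomposition of $\mathcal{A}$ is a map $\tau$ from $A$ to $\mathfrak{g}$-guarded plays, with image $P_\tau$, that is reflexive ($a\in\lambda(\tau(a))$), edge covering (adjacent elements in the Gaifman graph lie together in some $\lambda(p)$, $p\in P_\tau$), minimal ($[\tau(a),a]=[q,a]$ implies $\tau(a)\sqsubseteq q$) and vertex connected (for $q$ below some element of $P_\tau$ with $a\in\lambda(q)$, $[\tau(a),a]=[q,a]$); it is $k$-bounded if $|\lambda(p)|\le k$ for all $p\in P_\tau$. The $\mathfrak{g}$-guarded tree-width of $\mathcal{A}$ is the least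 $k$ such that $\mathcal{A}$ has a $k$-bounded $\mathfrak{g}$-guarded decomposition; the $\mathfrak{g}$-guarded coalgebra number is the least $k$ such that there is a coalgebra $\mathcal{A}\to\mathbb{G}_k^{\mathfrak{g}}\mathcal{A}$. *)

theory Defs
  imports Main "HOL-Library.Sublist"
begin

record ('a, 'r) struc =
  univ :: "'a set"
  rel  :: "'r \<Rightarrow> 'a list set"

text \<open>A sigma-structure: sigma is given by the relation symbols of type 'r with arity ar.\<close>
definition wf_struc :: "('r \<Rightarrow> nat) \<Rightarrow> ('a, 'r) struc \<Rightarrow> bool" where
  "wf_struc ar A \<longleftrightarrow> (\<forall>R. \<forall>t\<in>rel A R. length t = ar R \<and> set t \<subseteq> univ A)"

definition hom :: "('a, 'r) struc \<Rightarrow> ('b, 'r) struc \<Rightarrow> ('a \<Rightarrow> 'b) \<Rightarrow> bool" where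
  "hom A B f \<longleftrightarrow> (\<forall>a\<in>univ A. f a \<in> univ B) \<and> (\<forall>R. \<forall>t\<in>rel A R. map f t \<in> rel B R)"

datatype guarding = AtomG | LooseG

definition atom_guarded :: "('a, 'r) struc \<Rightarrow> 'a set \<Rightarrow> bool" where
  "atom_guarded A S \<longleftrightarrow> (\<exists>a\<in>univ A. S = {a}) \<or> (\<exists>R. \<exists>t\<in>rel A R. S = set t)"

definition loose_guarded :: "('a, 'r) struc \<Rightarrow> 'a set \<Rightarrow> bool" where
  "loose_guarded A S \<longleftrightarrow> S \<subseteq> univ A \<and>
     (\<forall>a\<in>S. \<forall>b\<in>S. \<exists>T. atom_guarded A T \<and> {a, b} \<subseteq> T)"

fun guarded :: "guarding \<Rightarrow> ('a, 'r) struc \<Rightarrow> 'a set \<Rightarrow> bool" where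
  "guarded AtomG A S = atom_guarded A S"
| "guarded LooseG A S = loose_guarded A S"

definition kguarded :: "guarding \<Rightarrow> nat \<Rightarrow> ('a, 'r) struc \<Rightarrow> 'a set \<Rightarrow> bool" where
  "kguarded g k A S \<longleftrightarrow> guarded g A S \<and> finite S \<and> card S \<le> k"

definition play :: "('a set \<Rightarrow> bool) \<Rightarrow> 'a set list \<Rightarrow> bool" where
  "play good p \<longleftrightarrow> p \<noteq> [] \<and> (\<forall>S\<in>set p. good S)"

definition fplay :: "('a set \<Rightarrow> bool) \<Rightarrow> 'a set list \<Rightarrow> 'a \<Rightarrow> bool" where
  "fplay good p a \<longleftrightarrow> play good p \<and> a \<in> last p"

fun lcp :: "'x list \<Rightarrow> 'x list \<Rightarrow> 'x list" where
  "lcp (x # xs) (y # ys) = (if x = y then x # lcp xs ys else [])"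
| "lcp _ _ = []"

text \<open>a lies in lambda(u) for all u on the prefix-order path from r to p.\<close>
definition path_ok :: "'a \<Rightarrow> 'a set list \<Rightarrow> 'a set list \<Rightarrow> bool" where
  "path_ok a r p \<longleftrightarrow> (\<forall>u. prefix r u \<and> prefix u p \<longrightarrow> a \<in> last u)"

definition peq :: "'a set list \<Rightarrow> 'a \<Rightarrow> 'a set list \<Rightarrow> 'a \<Rightarrow> bool" where
  "peq p a q b \<longleftrightarrow> a = b \<and> lcp p q \<noteq> [] \<and> path_ok a (lcp p q) p \<and> path_ok a (lcp p q) q"

definition cls :: "('a set \<Rightarrow> bool) \<Rightarrow> 'a set list \<Rightarrow> 'a \<Rightarrow> ('a set list \<times> 'a) set" where
  "cls good p a = {(q, b). fplay good q b \<and> peq p a q b}"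

definition Gk :: "guarding \<Rightarrow> nat \<Rightarrow> ('a, 'r) struc \<Rightarrow> (('a set list \<times> 'a) set, 'r) struc" where
  "Gk g k A =
     \<lparr> univ = {cls (kguarded g k A) p a | p a. fplay (kguarded g k A) p a},
       rel = (\<lambda>R. {map (cls (kguarded g k A) p) t | p t.
                      t \<in> rel A R \<and> play (kguarded g k A) p \<and> set t \<subseteq> last p}) \<rparr>"

definition eps :: "('a set list \<times> 'a) set \<Rightarrow> 'a" where
  "eps x = snd (SOME y. y \<in> x)"

text \<open>Functor action on f : A \<rightarrow> B: [p,a] maps to [f(p), f(a)] (B the codomain).\<close>
definition Gmap :: "guarding \<Rightarrow> nat \<Rightarrow> ('b, 'r) struc \<Rightarrow> ('a \<Rightarrow> 'b)
                     \<Rightarrow> ('a set list \<times> 'a) set \<Rightarrow> ('b set list \<times> 'b) set" where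
  "Gmap g k B f x = (let y = (SOME y. y \<in> x) in
      cls (kguarded g k B) (map ((`) f) (fst y)) (f (snd y)))"

text \<open>Comultiplication: [p,a] maps to [p*, [p,a]] where the i-th set of p* is
  {[p_i, b] | b in lambda(p_i)}, p_i the prefix of p of length i.\<close>
definition delta :: "guarding \<Rightarrow> nat \<Rightarrow> ('a, 'r) struc \<Rightarrow> ('a set list \<times> 'a) set
                      \<Rightarrow> (('a set list \<times> 'a) set set list \<times> ('a set list \<times> 'a) set) set" where
  "delta g k A x = (let y = (SOME y. y \<in> x); p = fst y; a = snd y in
      cls (kguarded g k (Gk g k A))
        (map (\<lambda>i. (\<lambda>b. cls (kguarded g k A) (take i p) b) ` last (take i p)) [1..<Suc (length p)])
        (cls (kguarded g k A) p a))"

definition coalgebra :: "guarding \<Rightarrow> nat \<Rightarrow> ('a, 'r) struc \<Rightarrow> ('a \<Rightarrow> ('a set list \<times> 'a) set) \<Rightarrow> bool" where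
  "coalgebra g k A \<alpha> \<longleftrightarrow> hom A (Gk g k A) \<alpha>
     \<and> (\<forall>a\<in>univ A. eps (\<alpha> a) = a)
     \<and> (\<forall>a\<in>univ A. Gmap g k (Gk g k A) \<alpha> (\<alpha> a) = delta g k A (\<alpha> a))"

definition coalgebra_number :: "guarding \<Rightarrow> ('a, 'r) struc \<Rightarrow> nat" where
  "coalgebra_number g A = (LEAST k. \<exists>\<alpha>. coalgebra g k A \<alpha>)"

definition gaifman_adj :: "('a, 'r) struc \<Rightarrow> 'a \<Rightarrow> 'a \<Rightarrow> bool" where
  "gaifman_adj A a b \<longleftrightarrow> a \<noteq> b \<and> (\<exists>R. \<exists>t\<in>rel A R. a \<in> set t \<and> b \<in> set t)"

definition guarded_decomp :: "guarding \<Rightarrow> ('a, 'r) struc \<Rightarrow> ('a \<Rightarrow> 'a set list) \<Rightarrow> bool" where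
  "guarded_decomp g A \<tau> \<longleftrightarrow>
     (\<forall>a\<in>univ A. play (guarded g A) (\<tau> a))
     \<and> (\<forall>a\<in>univ A. a \<in> last (\<tau> a))
     \<and> (\<forall>a\<in>univ A. \<forall>b\<in>univ A. gaifman_adj A a b \<longrightarrow> (\<exists>p\<in>\<tau> ` univ A. {a, b} \<subseteq> last p))
     \<and> (\<forall>a\<in>univ A. \<forall>q. fplay (guarded g A) q a \<and>
            cls (guarded g A) (\<tau> a) a = cls (guarded g A) q a \<longrightarrow> prefix (\<tau> a) q)
     \<and> (\<forall>a\<in>univ A. \<forall>q p. p \<in> \<tau> ` univ A \<and> prefix q p \<and> q \<noteq> [] \<and> a \<in> last q \<longrightarrow>
            cls (guarded g A) (\<tau> a) a = cls (guarded g A) q a)"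

definition k_bounded :: "nat \<Rightarrow> ('a, 'r) struc \<Rightarrow> ('a \<Rightarrow> 'a set list) \<Rightarrow> bool" where
  "k_bounded k A \<tau> \<longleftrightarrow> (\<forall>p\<in>\<tau> ` univ A. finite (last p) \<and> card (last p) \<le> k)"

definition guarded_treewidth :: "guarding \<Rightarrow> ('a, 'r) struc \<Rightarrow> nat" where
  "guarded_treewidth g A = (LEAST k. \<exists>\<tau>. guarded_decomp g A \<tau> \<and> k_bounded k A \<tau>)"

end

theory Submission
  imports Defs
begin

lemma prefix_nth_eq: "prefix u p \<Longrightarrow> i < length u \<Longrightarrow> u ! i = p ! i"
  by (metis nth_append prefix_def)

lemma prefix_take_len: "prefix u p \<Longrightarrow> u = take (length u) p"
  by (metis append_eq_conv_conj prefix_def)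

lemma prefix_last_nth: "prefix u p \<Longrightarrow> u \<noteq> [] \<Longrightarrow> last u = p ! (length u - 1)"
  by (simp add: last_conv_nth prefix_nth_eq)

lemma take_prefix_take: "m \<le> n \<Longrightarrow> prefix (take m p) (take n p)"
  by (metis min.absorb1 prefix_order.eq_iff take_is_prefix take_take)

lemma lcp_prefix1: "prefix (lcp p q) p"
  by (induction p q rule: lcp.induct) auto

lemma lcp_prefix2: "prefix (lcp p q) q"
  by (induction p q rule: lcp.induct) auto

lemma lcp_greatest: "prefix r p \<Longrightarrow> prefix r q \<Longrightarrow> prefix r (lcp p q)"
proof (induction p q arbitrary: r rule: lcp.induct)
  case (1 x xs y ys)
  then show ?case by (cases r) auto
qed auto

definition cont :: "'a \<Rightarrow> 'a set list \<Rightarrow> 'a set list \<Rightarrow> bool" where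
  "cont a r p \<longleftrightarrow> r \<noteq> [] \<and> prefix r p \<and> path_ok a r p"

lemma cont_nth: "cont a r p \<longleftrightarrow> r \<noteq> [] \<and> prefix r p \<and>
   (\<forall>i. length r - 1 \<le> i \<and> i < length p \<longrightarrow> a \<in> p ! i)"
proof
  assume H: "cont a r p"
  then have r: "r \<noteq> []" "prefix r p" "path_ok a r p" by (auto simp: cont_def)
  show "r \<noteq> [] \<and> prefix r p \<and> (\<forall>i. length r - 1 \<le> i \<and> i < length p \<longrightarrow> a \<in> p ! i)"
  proof (intro conjI allI impI)
    fix i assume i: "length r - 1 \<le> i \<and> i < length p"
    let ?u = "take (Suc i) p"
    have "prefix r ?u"
      by (metis Suc_pred' i length_greater_0_conv not_less_eq_eq prefix_take_len r(1,2) take_prefix_take)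
    moreover have "prefix ?u p" by (rule take_is_prefix)
    ultimately have au: "a \<in> last ?u" using r(3) by (auto simp: path_ok_def)
    have "i < length p" using i by simp
    then have "?u = take i p @ [p ! i]" by (simp add: take_Suc_conv_app_nth)
    then have "last ?u = p ! i" by simp
    with au show "a \<in> p ! i" by simp
  qed (use r in auto)
next
  assume H: "r \<noteq> [] \<and> prefix r p \<and> (\<forall>i. length r - 1 \<le> i \<and> i < length p \<longrightarrow> a \<in> p ! i)"
  show "cont a r p"
    unfolding cont_def path_ok_def
  proof (intro conjI allI impI)
    fix u assume u: "prefix r u \<and> prefix u p"
    then have "u \<noteq> []" using H by auto
    then have "last u = p ! (length u - 1)" using u prefix_last_nth by blast
    moreover have "length r \<le> length u" "length u \<le> length p" using u prefix_length_le by auto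
    ultimately show "a \<in> last u" using H \<open>u \<noteq> []\<close>
      by (metis diff_le_mono diff_less length_greater_0_conv less_le_trans zero_less_one)
  qed (use H in auto)
qed

lemma cont_sub: assumes "cont a r p" "prefix r s" "prefix s p" shows "cont a s p"
proof -
  have "s \<noteq> []" using assms unfolding cont_def by auto
  moreover have "path_ok a s p"
    unfolding path_ok_def
  proof (intro allI impI)
    fix u assume u: "prefix s u \<and> prefix u p"
    then have "prefix r u" using assms(2) prefix_order.trans by blast
    then show "a \<in> last u" using assms(1) u unfolding cont_def path_ok_def by simp
  qed
  ultimately show ?thesis using assms(3) unfolding cont_def by simp
qed

lemma cont_join: assumes "cont a r p" "cont a s q" "prefix s p" "prefix r s" shows "cont a r q"
proof -
  have q: "prefix s q" using assms(2) unfolding cont_def by simp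
  have "path_ok a r q"
    unfolding path_ok_def
  proof (intro allI impI)
    fix u assume u: "prefix r u \<and> prefix u q"
    have "prefix u s \<or> prefix s u" using prefix_same_cases[OF conjunct2[OF u] q] .
    then show "a \<in> last u"
    proof
      assume "prefix u s"
      then have "prefix u p" using assms(3) by (rule prefix_order.trans)
      then show ?thesis using assms(1) u unfolding cont_def path_ok_def by simp
    next
      assume "prefix s u"
      then show ?thesis using assms(2) u unfolding cont_def path_ok_def by simp
    qed
  qed
  moreover have "prefix r q" using assms(4) q by (rule prefix_order.trans)
  ultimately show ?thesis using assms(1) unfolding cont_def by simp
qed

lemma cont_refl: assumes "p \<noteq> []" "a \<in> last p" shows "cont a p p"
proof -
  have "path_ok a p p"
    unfolding path_ok_def
  proof (intro allI impI)
    fix u assume "prefix p u \<and> prefix u p"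
    then have "u = p" by (simp add: prefix_order.antisym)
    then show "a \<in> last u" using assms by simp
  qed
  then show ?thesis using assms unfolding cont_def by simp
qed

lemma cont_last: "cont a r p \<Longrightarrow> a \<in> last r"
  unfolding cont_def path_ok_def by simp

lemma cont_self: assumes "cont a r p" shows "cont a r r"
proof -
  have "a \<in> last r" using assms by (rule cont_last)
  moreover have "r \<noteq> []" using assms unfolding cont_def by simp
  ultimately show ?thesis by (rule cont_refl[rotated])
qed

lemma peq_iff: "peq p a q b \<longleftrightarrow> a = b \<and> (\<exists>r. cont a r p \<and> cont a r q)"
proof
  assume H: "peq p a q b"
  then have "cont a (lcp p q) p" "cont a (lcp p q) q"
    unfolding peq_def cont_def by (auto simp: lcp_prefix1 lcp_prefix2)
  then show "a = b \<and> (\<exists>r. cont a r p \<and> cont a r q)" using H unfolding peq_def by blast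
next
  assume "a = b \<and> (\<exists>r. cont a r p \<and> cont a r q)"
  then obtain r where r: "a = b" "cont a r p" "cont a r q" by blast
  have "prefix r p" "prefix r q" using r unfolding cont_def by simp_all
  then have rl: "prefix r (lcp p q)" by (rule lcp_greatest)
  have "cont a (lcp p q) p" using cont_sub[OF r(2) rl lcp_prefix1] .
  moreover have "cont a (lcp p q) q" using cont_sub[OF r(3) rl lcp_prefix2] .
  ultimately show "peq p a q b" using r(1) unfolding peq_def cont_def by simp
qed

lemma peq_sym: assumes "peq p a q b" shows "peq q b p a"
proof -
  obtain r where "a = b" "cont a r p" "cont a r q" using assms unfolding peq_iff by blast
  then show ?thesis unfolding peq_iff by auto
qed

lemma peq_refl: assumes "p \<noteq> []" "a \<in> last p" shows "peq p a p a"
proof -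
  have "cont a p p" using cont_refl[OF assms] .
  then show ?thesis unfolding peq_iff by blast
qed

lemma peq_trans: assumes "peq p a q b" "peq q b s c" shows "peq p a s c"
proof -
  obtain r1 where r1: "a = b" "cont a r1 p" "cont a r1 q" using assms(1) unfolding peq_iff by blast
  obtain r2 where r2: "b = c" "cont b r2 q" "cont b r2 s" using assms(2) unfolding peq_iff by blast
  have r2': "cont a r2 q" "cont a r2 s" using r2 r1(1) by simp_all
  have q1: "prefix r1 q" using r1(3) unfolding cont_def by simp
  have q2: "prefix r2 q" using r2'(1) unfolding cont_def by simp
  have "prefix r1 r2 \<or> prefix r2 r1" using prefix_same_cases[OF q1 q2] .
  then show ?thesis
  proof
    assume 1: "prefix r1 r2"
    have "cont a r1 s" using cont_join[OF r1(3) r2'(2) q2 1] .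
    then show ?thesis using r1 r2 unfolding peq_iff by blast
  next
    assume 2: "prefix r2 r1"
    have "cont a r2 p" using cont_join[OF r2'(1) r1(2) q1 2] .
    then show ?thesis using r1 r2' r2(1) unfolding peq_iff by blast
  qed
qed

lemma cls_eq: assumes "peq p a q a" shows "cls good p a = cls good q a"
proof -
  have "peq p a s b \<longleftrightarrow> peq q a s b" for s b
    using peq_trans[OF assms, of s b] peq_trans[OF peq_sym[OF assms], of s b] by blast
  then show ?thesis unfolding cls_def by simp
qed

lemma cls_self: assumes "fplay good p a" shows "(p, a) \<in> cls good p a"
proof -
  have "p \<noteq> []" "a \<in> last p" using assms unfolding fplay_def play_def by simp_all
  then have "peq p a p a" by (rule peq_refl)
  then show ?thesis using assms unfolding cls_def by simp
qed

lemma cls_eqD: assumes "cls good p a = cls good q a" "fplay good q a" shows "peq p a q a"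
proof -
  have "(q, a) \<in> cls good p a" using cls_self[OF assms(2)] assms(1) by simp
  then show ?thesis unfolding cls_def by simp
qed

lemma eps_cls: assumes "fplay good p a" shows "eps (cls good p a) = a"
proof -
  have "\<exists>y. y \<in> cls good p a" using cls_self[OF assms] by blast
  then have "(SOME y. y \<in> cls good p a) \<in> cls good p a" by (rule someI_ex)
  then show ?thesis unfolding eps_def cls_def peq_def by auto
qed

definition root :: "'a set list \<Rightarrow> 'a \<Rightarrow> 'a set list" where
  "root p a = take (LEAST n. cont a (take n p) p) p"

lemma root_cont: assumes "p \<noteq> []" "a \<in> last p" shows "cont a (root p a) p"
proof -
  have "cont a (take (length p) p) p" using cont_refl[OF assms] by simp
  then show ?thesis unfolding root_def by (rule LeastI)
qed

lemma root_min: assumes "cont a r p" shows "prefix (root p a) r"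
proof -
  have "prefix r p" using assms unfolding cont_def by simp
  then have r: "r = take (length r) p" by (rule prefix_take_len)
  then have "cont a (take (length r) p) p" using assms by simp
  then have "(LEAST n. cont a (take n p) p) \<le> length r" by (rule Least_le)
  then have "prefix (take (LEAST n. cont a (take n p) p) p) (take (length r) p)" by (rule take_prefix_take)
  then show ?thesis unfolding root_def using r by simp
qed

lemma root_peq_min: assumes "peq p a q a" "p \<noteq> []" "a \<in> last p"
  shows "cont a (root p a) q"
proof -
  obtain r where r: "cont a r p" "cont a r q" using assms(1) unfolding peq_iff by blast
  have 1: "prefix (root p a) r" using root_min[OF r(1)] .
  have 2: "cont a (root p a) p" using root_cont[OF assms(2,3)] .
  have 3: "prefix r p" using r(1) unfolding cont_def by simp
  show ?thesis using cont_join[OF 2 r(2) 3 1] .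
qed


lemma cont_trunc: assumes "cont a r p" "prefix r s" "prefix s p" shows "cont a r s"
proof -
  have "path_ok a r s" unfolding path_ok_def
  proof (intro allI impI)
    fix u assume u: "prefix r u \<and> prefix u s"
    then have "prefix u p" using assms(3) prefix_order.trans by blast
    then show "a \<in> last u" using u assms(1) unfolding cont_def path_ok_def by simp
  qed
  then show ?thesis using assms unfolding cont_def by simp
qed

lemma peq_of_cont: assumes "cont a r p" shows "peq r a p a"
proof -
  have "cont a r r" using cont_self[OF assms] .
  then show ?thesis using assms unfolding peq_iff by blast
qed

lemma guarded_sub: "wf_struc ar A \<Longrightarrow> guarded g A S \<Longrightarrow> S \<subseteq> univ A"
  by (cases g) (auto simp: atom_guarded_def loose_guarded_def wf_struc_def)

lemma kguarded_guarded: "kguarded g k A S \<Longrightarrow> guarded g A S"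
  by (simp add: kguarded_def)

lemma play_prefix: assumes "play good p" "prefix q p" "q \<noteq> []" shows "play good q"
proof -
  have "set q \<subseteq> set p" using assms(2) by (rule set_mono_prefix)
  then show ?thesis using assms unfolding play_def by blast
qed

lemma kplay_gplay: "play (kguarded g k A) p \<Longrightarrow> play (guarded g A) p"
  unfolding play_def kguarded_def by auto

lemma set_last_take: "S \<in> set p \<Longrightarrow> \<exists>i<length p. S = last (take (Suc i) p) \<and> S = p ! i"
proof -
  assume "S \<in> set p"
  then obtain i where i: "i < length p" "S = p ! i" by (metis in_set_conv_nth)
  then have "take (Suc i) p = take i p @ [p ! i]" by (simp add: take_Suc_conv_app_nth)
  then show ?thesis using i by auto
qed

lemma last_take_Suc: "i < length p \<Longrightarrow> last (take (Suc i) p) = p ! i"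
  by (simp add: take_Suc_conv_app_nth)

lemma empty_kguarded: "wf_struc ar A \<Longrightarrow> R' \<in> rel A R \<Longrightarrow> R' = [] \<Longrightarrow> kguarded g k A {}"
  by (cases g) (auto simp: kguarded_def atom_guarded_def loose_guarded_def)

lemma empty_kguarded_loose: "kguarded LooseG k A {}"
  by (auto simp: kguarded_def loose_guarded_def)

lemma Gk_rel: "x \<in> rel (Gk g k A) R \<longleftrightarrow>
   (\<exists>p t. x = map (cls (kguarded g k A) p) t \<and> t \<in> rel A R \<and> play (kguarded g k A) p \<and> set t \<subseteq> last p)"
  by (simp add: Gk_def)

lemma Gk_univ: "x \<in> univ (Gk g k A) \<longleftrightarrow> (\<exists>p a. x = cls (kguarded g k A) p a \<and> fplay (kguarded g k A) p a)"
  by (simp add: Gk_def)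

lemma Gk_relI: "t \<in> rel A R \<Longrightarrow> play (kguarded g k A) p \<Longrightarrow> set t \<subseteq> last p \<Longrightarrow>
    map (cls (kguarded g k A) p) t \<in> rel (Gk g k A) R"
  unfolding Gk_rel by blast

locale dec =
  fixes ar :: "'r \<Rightarrow> nat" and g :: guarding and k :: nat and A :: "('a, 'r) struc"
    and \<tau> :: "'a \<Rightarrow> 'a set list"
  assumes wf: "wf_struc ar A" and D: "guarded_decomp g A \<tau>" and B: "k_bounded k A \<tau>"
begin

lemmas Dc = D[unfolded guarded_decomp_def]
lemmas D1 = Dc[THEN conjunct1, rule_format]
lemmas D2 = Dc[THEN conjunct2, THEN conjunct1, rule_format]
lemmas D3 = Dc[THEN conjunct2, THEN conjunct2, THEN conjunct1, rule_format]
lemmas D4 = Dc[THEN conjunct2, THEN conjunct2, THEN conjunct2, THEN conjunct1, rule_format, OF _ conjI]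
lemmas D5 = Dc[THEN conjunct2, THEN conjunct2, THEN conjunct2, THEN conjunct2, rule_format, OF _ conjI, OF _ _ conjI, OF _ _ _ conjI]

lemma L: assumes c: "c \<in> univ A" and q: "prefix q (\<tau> c)" "q \<noteq> []" and d: "d \<in> last q"
  shows "d \<in> univ A \<and> prefix (\<tau> d) q \<and> cont d (\<tau> d) q"
proof -
  have pq: "play (guarded g A) q" using play_prefix[OF D1[OF c] q] .
  then have "last q \<in> set q" using q by simp
  then have "guarded g A (last q)" using pq unfolding play_def by blast
  then have du: "d \<in> univ A" using guarded_sub[OF wf] d by blast
  have fq: "fplay (guarded g A) q d" using pq d unfolding fplay_def by blast
  have ceq: "cls (guarded g A) (\<tau> d) d = cls (guarded g A) q d"
    using D5[OF du _ q(1) q(2) d] c by blast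
  have pre: "prefix (\<tau> d) q" using D4[OF du fq ceq] .
  have "peq (\<tau> d) d q d" using cls_eqD[OF ceq fq] .
  then obtain r where r: "cont d r (\<tau> d)" "cont d r q" unfolding peq_iff by blast
  have rt: "prefix r (\<tau> d)" using r(1) unfolding cont_def by simp
  have "cont d (\<tau> d) q" using cont_sub[OF r(2) rt pre] .
  then show ?thesis using du pre by blast
qed

lemma tau_ne: "c \<in> univ A \<Longrightarrow> \<tau> c \<noteq> []"
  using D1 unfolding play_def by blast

lemma cont_mem: assumes "cont d r q" "prefix r s" "prefix s q" "s \<noteq> []" shows "d \<in> last s"
proof -
  have "path_ok d r q" using assms(1) unfolding cont_def by simp
  then show ?thesis using assms(2,3) unfolding path_ok_def by blast
qed

lemma kplay: assumes c: "c \<in> univ A" shows "play (kguarded g k A) (\<tau> c)"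
  unfolding play_def
proof (intro conjI ballI)
  show "\<tau> c \<noteq> []" using tau_ne[OF c] .
next
  fix S assume S: "S \<in> set (\<tau> c)"
  obtain i where i: "i < length (\<tau> c)" "S = last (take (Suc i) (\<tau> c))"
    using set_last_take[OF S] by blast
  let ?q = "take (Suc i) (\<tau> c)"
  have q: "prefix ?q (\<tau> c)" "?q \<noteq> []" using i by (auto simp: take_is_prefix)
  have gS: "guarded g A S" using D1[OF c] S unfolding play_def by blast
  have "finite S \<and> card S \<le> k"
  proof (cases "S = {}")
    case True then show ?thesis by simp
  next
    case False
    have Ld: "d \<in> univ A \<and> prefix (\<tau> d) ?q \<and> cont d (\<tau> d) ?q" if "d \<in> S" for d
      using L[OF c q] i that by blast
    let ?L = "(\<lambda>d. length (\<tau> d)) ` S"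
    have "?L \<subseteq> {..length ?q}"
    proof
      fix x assume "x \<in> ?L"
      then obtain d where dd: "d \<in> S" "x = length (\<tau> d)" by blast
      then have "prefix (\<tau> d) ?q" using Ld[of d] by blast
      then have "length (\<tau> d) \<le> length ?q" by (rule prefix_length_le)
      then show "x \<in> {..length ?q}" using dd(2) by simp
    qed
    then have finL: "finite ?L" using finite_subset by blast
    have "?L \<noteq> {}" using False by blast
    then have "Max ?L \<in> ?L" using finL Max_in by blast
    then obtain d0 where d0: "d0 \<in> S" "length (\<tau> d0) = Max ?L" by auto
    have Ld0: "d0 \<in> univ A" "prefix (\<tau> d0) ?q" using Ld[OF d0(1)] by simp_all
    have ne: "\<tau> d0 \<noteq> []" using tau_ne[OF Ld0(1)] .
    have "S \<subseteq> last (\<tau> d0)"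
    proof
      fix d assume d: "d \<in> S"
      have "length (\<tau> d) \<in> ?L" using d by blast
      then have le: "length (\<tau> d) \<le> length (\<tau> d0)" using d0(2) finL by simp
      have Ldd: "prefix (\<tau> d) ?q" "cont d (\<tau> d) ?q" using Ld[OF d] by simp_all
      have pd: "prefix (\<tau> d) (\<tau> d0)" using prefix_length_prefix[OF Ldd(1) Ld0(2) le] .
      show "d \<in> last (\<tau> d0)" using cont_mem[OF Ldd(2) pd Ld0(2) ne] .
    qed
    moreover have "\<tau> d0 \<in> \<tau> ` univ A" using Ld0(1) by blast
    then have "finite (last (\<tau> d0)) \<and> card (last (\<tau> d0)) \<le> k" using B unfolding k_bounded_def by blast
    ultimately show ?thesis using card_mono finite_subset le_trans by metis
  qed
  then show "kguarded g k A S" using gS unfolding kguarded_def by blast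
qed

definition \<alpha> where "\<alpha> a = cls (kguarded g k A) (\<tau> a) a"

lemma fplay_tau: "a \<in> univ A \<Longrightarrow> fplay (kguarded g k A) (\<tau> a) a"
  unfolding fplay_def using kplay D2 by blast

lemma alpha_eq: assumes c: "c \<in> univ A" and q: "prefix q (\<tau> c)" "q \<noteq> []" and d: "d \<in> last q"
  shows "\<alpha> d = cls (kguarded g k A) q d"
proof -
  have "cont d (\<tau> d) q" using L[OF assms] by blast
  then have "peq (\<tau> d) d q d" by (rule peq_of_cont)
  then show ?thesis unfolding \<alpha>_def by (rule cls_eq)
qed

lemma hom_alpha: "hom A (Gk g k A) \<alpha>"
  unfolding hom_def
proof (intro conjI ballI allI)
  fix a assume a: "a \<in> univ A"
  show "\<alpha> a \<in> univ (Gk g k A)" unfolding Gk_univ \<alpha>_def using fplay_tau[OF a] by blast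
next
  fix R t assume t: "t \<in> rel A R"
  have tu: "set t \<subseteq> univ A" using wf t unfolding wf_struc_def by blast
  show "map \<alpha> t \<in> rel (Gk g k A) R"
  proof (cases "t = []")
    case True
    have "play (kguarded g k A) [{}]" using empty_kguarded[OF wf t True] unfolding play_def by auto
    from Gk_relI[OF t this] show ?thesis using True by simp
  next
    case False
    let ?L = "(\<lambda>d. length (\<tau> d)) ` set t"
    have "?L \<noteq> {}" using False by simp
    then have "Max ?L \<in> ?L" by (intro Max_in) simp_all
    then obtain x0 where x0a: "x0 \<in> set t" "Max ?L = length (\<tau> x0)" by (rule imageE)
    then have x0: "x0 \<in> set t" "length (\<tau> x0) = Max ?L" by simp_all
    have x0u: "x0 \<in> univ A" using x0 tu by blast
    have ne: "\<tau> x0 \<noteq> []" using tau_ne[OF x0u] .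
    have inlast: "y \<in> last (\<tau> x0)" if y: "y \<in> set t" for y
    proof (cases "y = x0")
      case True then show ?thesis using D2 x0u by blast
    next
      case False
      have yu: "y \<in> univ A" using y tu by blast
      have "gaifman_adj A y x0" using False y x0 t unfolding gaifman_adj_def by blast
      then obtain c where c: "c \<in> univ A" "{y, x0} \<subseteq> last (\<tau> c)" using D3[OF yu x0u] by blast
      have nc: "\<tau> c \<noteq> []" using tau_ne[OF c(1)] .
      have Ly: "prefix (\<tau> y) (\<tau> c)" "cont y (\<tau> y) (\<tau> c)" using L[OF c(1) _ nc] c(2) by blast+
      have Lx: "prefix (\<tau> x0) (\<tau> c)" using L[OF c(1) _ nc] c(2) by blast
      have "length (\<tau> y) \<in> ?L" using y by blast
      then have le: "length (\<tau> y) \<le> length (\<tau> x0)" using x0(2) by simp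
      have pd: "prefix (\<tau> y) (\<tau> x0)" using prefix_length_prefix[OF Ly(1) Lx le] .
      show ?thesis using cont_mem[OF Ly(2) pd Lx ne] .
    qed
    have eq: "map \<alpha> t = map (cls (kguarded g k A) (\<tau> x0)) t"
      by (rule map_cong[OF refl], rule alpha_eq[OF x0u prefix_order.refl ne inlast])
    have sub: "set t \<subseteq> last (\<tau> x0)" using inlast by blast
    have "map (cls (kguarded g k A) (\<tau> x0)) t \<in> rel (Gk g k A) R" by (rule Gk_relI[OF t kplay[OF x0u] sub])
    then show ?thesis unfolding eq .
  qed
qed

lemma eps_alpha: assumes "a \<in> univ A" shows "eps (\<alpha> a) = a"
  unfolding \<alpha>_def using eps_cls[OF fplay_tau[OF assms]] .

lemma comult: assumes a: "a \<in> univ A"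
  shows "Gmap g k (Gk g k A) \<alpha> (\<alpha> a) = delta g k A (\<alpha> a)"
proof -
  let ?K = "kguarded g k A"
  let ?KK = "kguarded g k (Gk g k A)"
  define y where "y = (SOME y. y \<in> \<alpha> a)"
  have "\<exists>y. y \<in> \<alpha> a" unfolding \<alpha>_def using cls_self[OF fplay_tau[OF a]] by blast
  then have ym: "y \<in> \<alpha> a" unfolding y_def by (rule someI_ex)
  obtain p b where yp: "y = (p, b)" by (cases y)
  have "fplay ?K p b \<and> peq (\<tau> a) a p b" using ym unfolding yp \<alpha>_def cls_def by simp
  then have fp: "fplay ?K p b" and pe0: "peq (\<tau> a) a p b" by simp_all
  have ab: "b = a" using pe0 unfolding peq_def by simp
  have fp: "fplay ?K p a" using fp ab by simp
  have pe: "peq (\<tau> a) a p a" using pe0 ab by simp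
  have aeq: "cls ?K p a = \<alpha> a" unfolding \<alpha>_def using cls_eq[OF peq_sym[OF pe]] .
  have fpg: "fplay (guarded g A) p a" using fp kplay_gplay unfolding fplay_def by blast
  have pre: "prefix (\<tau> a) p" using D4[OF a fpg cls_eq[OF pe]] .
  obtain r where r: "cont a r (\<tau> a)" "cont a r p" using pe unfolding peq_iff by blast
  have rt: "prefix r (\<tau> a)" using r(1) unfolding cont_def by simp
  have ca: "cont a (\<tau> a) p" using cont_sub[OF r(2) rt pre] .
  have canth: "a \<in> p ! i" if "length (\<tau> a) - 1 \<le> i" "i < length p" for i
    using ca that unfolding cont_nth by blast
  define m where "m = length (\<tau> a)"
  have ne: "\<tau> a \<noteq> []" using tau_ne[OF a] .
  have mle: "m \<le> length p" unfolding m_def using pre by (rule prefix_length_le)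
  have m1: "1 \<le> m" unfolding m_def using ne by (cases "\<tau> a") simp_all
  have taum: "\<tau> a = take m p" unfolding m_def using pre by (rule prefix_take_len)
  define P where "P = map ((`) \<alpha>) p"
  define Ps where "Ps = map (\<lambda>i. (\<lambda>b. cls ?K (take i p) b) ` last (take i p)) [1..<Suc (length p)]"
  have lenP: "length P = length p" "length Ps = length p" unfolding P_def Ps_def by (simp_all del: upt_Suc)
  have Psn: "Ps ! i = (\<lambda>b. cls ?K (take (Suc i) p) b) ` (p ! i)" if "i < length p" for i
  proof -
    have "Ps ! i = (\<lambda>b. cls ?K (take (Suc i) p) b) ` last (take (Suc i) p)"
      unfolding Ps_def using that by (simp del: upt_Suc)
    then show ?thesis using last_take_Suc[OF that] by simp
  qed
  have Pn: "P ! i = \<alpha> ` (p ! i)" if "i < length p" for i using that unfolding P_def by simp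
  have tk: "take m P = take m Ps"
  proof (rule nth_equalityI)
    show "length (take m P) = length (take m Ps)" using lenP by simp
  next
    fix i assume "i < length (take m P)"
    then have i: "i < m" "i < length p" using lenP mle by auto
    have "prefix (take (Suc i) p) (take m p)" using i by (intro take_prefix_take) simp
    then have qp: "prefix (take (Suc i) p) (\<tau> a)" using taum by simp
    have qn: "take (Suc i) p \<noteq> []" using i by (cases p) simp_all
    have "\<alpha> ` (p ! i) = (\<lambda>b. cls ?K (take (Suc i) p) b) ` (p ! i)"
    proof (rule image_cong[OF refl])
      fix b assume "b \<in> p ! i"
      then have "b \<in> last (take (Suc i) p)" using last_take_Suc[OF i(2)] by simp
      then show "\<alpha> b = cls ?K (take (Suc i) p) b" by (rule alpha_eq[OF a qp qn])
    qed
    then show "take m P ! i = take m Ps ! i" using i Pn Psn by simp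
  qed
  have c1: "cont (\<alpha> a) (take m P) P"
    unfolding cont_nth
  proof (intro conjI allI impI)
    show "take m P \<noteq> []" using m1 mle lenP by auto
    show "prefix (take m P) P" by (rule take_is_prefix)
    fix i assume i: "length (take m P) - 1 \<le> i \<and> i < length P"
    then have i2: "length (\<tau> a) - 1 \<le> i" "i < length p" using lenP mle unfolding m_def by auto
    have "a \<in> p ! i" using canth[OF i2] .
    then show "\<alpha> a \<in> P ! i" using Pn[OF i2(2)] by simp
  qed
  have c2: "cont (\<alpha> a) (take m P) Ps"
    unfolding cont_nth
  proof (intro conjI allI impI)
    show "take m P \<noteq> []" using m1 mle lenP by auto
    show "prefix (take m P) Ps" unfolding tk by (rule take_is_prefix)
    fix i assume i: "length (take m P) - 1 \<le> i \<and> i < length Ps"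
    then have i2: "length (\<tau> a) - 1 \<le> i" "i < length p" using lenP mle unfolding m_def by auto
    have ai: "a \<in> p ! i" using canth[OF i2] .
    have "prefix (take m p) (take (Suc i) p)" using i2 m1 unfolding m_def by (intro take_prefix_take) simp
    then have "prefix (\<tau> a) (take (Suc i) p)" using taum by simp
    then have "cont a (\<tau> a) (take (Suc i) p)" using cont_trunc[OF ca _ take_is_prefix] by blast
    then have "peq (\<tau> a) a (take (Suc i) p) a" by (rule peq_of_cont)
    then have "\<alpha> a = cls ?K (take (Suc i) p) a" unfolding \<alpha>_def by (rule cls_eq)
    then show "\<alpha> a \<in> Ps ! i" using Psn[OF i2(2)] ai by simp
  qed
  have "peq P (\<alpha> a) Ps (\<alpha> a)" unfolding peq_iff using c1 c2 by blast
  then have "cls ?KK P (\<alpha> a) = cls ?KK Ps (\<alpha> a)" by (rule cls_eq)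
  moreover have "Gmap g k (Gk g k A) \<alpha> (\<alpha> a) = cls ?KK P (\<alpha> a)"
    unfolding Gmap_def Let_def y_def[symmetric] yp P_def using ab by simp
  moreover have "delta g k A (\<alpha> a) = cls ?KK Ps (\<alpha> a)"
    unfolding delta_def Let_def y_def[symmetric] yp Ps_def using aeq ab by simp
  ultimately show ?thesis by simp
qed

lemma coalg: "coalgebra g k A \<alpha>"
  unfolding coalgebra_def using hom_alpha eps_alpha comult by blast

end

lemma dec_to_coalg: "wf_struc ar A \<Longrightarrow> guarded_decomp g A \<tau> \<Longrightarrow> k_bounded k A \<tau> \<Longrightarrow> \<exists>\<alpha>. coalgebra g k A \<alpha>"
  using dec.coalg dec.intro by blast


lemma last_take: "1 \<le> i \<Longrightarrow> i \<le> length p \<Longrightarrow> last (take i p) = p ! (i - 1)"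
  using last_take_Suc[of "i - 1" p] by simp

lemma cont_mem2: assumes "cont d r q" "prefix r s" "prefix s q" "s \<noteq> []" shows "d \<in> last s"
proof -
  have "path_ok d r q" using assms(1) unfolding cont_def by simp
  then show ?thesis using assms(2,3) unfolding path_ok_def by blast
qed

locale coal =
  fixes ar :: "'r \<Rightarrow> nat" and g :: guarding and k :: nat and A :: "('a, 'r) struc"
    and \<alpha> :: "'a \<Rightarrow> ('a set list \<times> 'a) set"
  assumes wf: "wf_struc ar A" and C: "coalgebra g k A \<alpha>"
begin

abbreviation "K \<equiv> kguarded g k A"

lemmas Cc = C[unfolded coalgebra_def]
lemmas C1 = Cc[THEN conjunct1]
lemmas C2 = Cc[THEN conjunct2, THEN conjunct1, rule_format]
lemmas C3 = Cc[THEN conjunct2, THEN conjunct2, rule_format]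

definition pa where "pa a = fst (SOME y. y \<in> \<alpha> a)"
definition \<tau> where "\<tau> a = root (pa a) a"

lemma hom_univ: "a \<in> univ A \<Longrightarrow> \<alpha> a \<in> univ (Gk g k A)"
  using C1 unfolding hom_def by blast

lemma hom_rel: "t \<in> rel A R \<Longrightarrow> map \<alpha> t \<in> rel (Gk g k A) R"
  using C1 unfolding hom_def by blast

lemma rep: assumes a: "a \<in> univ A"
  shows "(SOME y. y \<in> \<alpha> a) = (pa a, a) \<and> fplay K (pa a) a \<and> \<alpha> a = cls K (pa a) a"
proof -
  have "\<alpha> a \<in> univ (Gk g k A)" using hom_univ[OF a] .
  then obtain p a' where pa': "\<alpha> a = cls K p a'" "fplay K p a'" unfolding Gk_univ by blast
  have "eps (\<alpha> a) = a'" unfolding pa'(1) by (rule eps_cls[OF pa'(2)])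
  then have "a = a'" using C2[OF a] by simp
  then have pa1: "\<alpha> a = cls K p a" "fplay K p a" using pa' by simp_all
  have "(p, a) \<in> \<alpha> a" unfolding pa1(1) by (rule cls_self[OF pa1(2)])
  then have "\<exists>y. y \<in> \<alpha> a" by (rule exI)
  then have ym: "(SOME y. y \<in> \<alpha> a) \<in> \<alpha> a" by (rule someI_ex)
  obtain q b where yq: "(SOME y. y \<in> \<alpha> a) = (q, b)" by (cases "SOME y. y \<in> \<alpha> a")
  have "(q, b) \<in> \<alpha> a" using ym unfolding yq .
  then have "fplay K q b \<and> peq p a q b" unfolding pa1(1) cls_def by simp
  then have fq: "fplay K q b" and pe: "peq p a q b" by simp_all
  have ab: "b = a" using pe unfolding peq_def by simp
  have pq: "pa a = q" unfolding pa_def yq by simp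
  have pe2: "peq p a q a" using pe ab by simp
  have "cls K p a = cls K q a" using cls_eq[OF pe2] .
  then have e3: "\<alpha> a = cls K (pa a) a" using pa1(1) pq by simp
  have e1: "(SOME y. y \<in> \<alpha> a) = (pa a, a)" using yq ab pq by simp
  have e2: "fplay K (pa a) a" using fq ab pq by simp
  show ?thesis using e1 e2 e3 by blast
qed

lemma pa_ne: "a \<in> univ A \<Longrightarrow> pa a \<noteq> []"
  using rep unfolding fplay_def play_def by blast

lemma pa_last: "a \<in> univ A \<Longrightarrow> a \<in> last (pa a)"
  using rep unfolding fplay_def by blast

lemma tau_cont: "a \<in> univ A \<Longrightarrow> cont a (\<tau> a) (pa a)"
  unfolding \<tau>_def by (rule root_cont[OF pa_ne pa_last])

lemma tau_min: assumes a: "a \<in> univ A" and pe: "peq (pa a) a q a" shows "cont a (\<tau> a) q"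
  unfolding \<tau>_def by (rule root_peq_min[OF pe pa_ne[OF a] pa_last[OF a]])

lemma tau_min2: assumes a: "a \<in> univ A" and fq: "fplay K q a" and eq: "\<alpha> a = cls K q a"
  shows "cont a (\<tau> a) q"
proof -
  have "cls K (pa a) a = cls K q a" using rep[OF a] eq by simp
  then have "peq (pa a) a q a" using fq by (rule cls_eqD)
  then show ?thesis by (rule tau_min[OF a])
qed

lemma kplay_pa: "a \<in> univ A \<Longrightarrow> play K (pa a)"
  using rep unfolding fplay_def by blast

lemma kplay_prefix: assumes a: "a \<in> univ A" and q: "prefix q (pa a)" "q \<noteq> []" shows "play K q"
  using play_prefix[OF kplay_pa[OF a] q] .

lemma tau_prefix: "a \<in> univ A \<Longrightarrow> prefix (\<tau> a) (pa a)"
  using tau_cont unfolding cont_def by blast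

lemma tau_ne: "a \<in> univ A \<Longrightarrow> \<tau> a \<noteq> []"
  using tau_cont unfolding cont_def by blast

lemma kplay_tau: "a \<in> univ A \<Longrightarrow> play K (\<tau> a)"
  by (rule kplay_prefix[OF _ tau_prefix tau_ne])

lemma edge_aux: assumes t: "t \<in> rel A R"
  shows "\<exists>p. play K p \<and> set t \<subseteq> last p \<and> (\<forall>x\<in>set t. \<alpha> x = cls K p x)"
proof -
  have "map \<alpha> t \<in> rel (Gk g k A) R" using C1 t unfolding hom_def by blast
  then obtain p t' where pt: "map \<alpha> t = map (cls K p) t'" "t' \<in> rel A R" "play K p" "set t' \<subseteq> last p"
    unfolding Gk_rel by blast
  have len: "length t' = length t" using pt(1) by (metis length_map)
  have tu: "set t \<subseteq> univ A" using wf t unfolding wf_struc_def by blast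
  have eqi: "t ! i = t' ! i \<and> \<alpha> (t ! i) = cls K p (t ! i)" if i: "i < length t" for i
  proof -
    have e: "\<alpha> (t ! i) = cls K p (t' ! i)" using pt(1) i len nth_map by metis
    have "t' ! i \<in> last p" using pt(4) i len nth_mem by (metis subsetD)
    then have fp: "fplay K p (t' ! i)" using pt(3) unfolding fplay_def by simp
    have "t ! i \<in> univ A" using tu i nth_mem by blast
    then have "t ! i = eps (\<alpha> (t ! i))" using C2 by simp
    also have "\<dots> = t' ! i" using e eps_cls[OF fp] by simp
    finally show ?thesis using e by simp
  qed
  have "set t \<subseteq> last p"
  proof
    fix x assume "x \<in> set t"
    then obtain i where "i < length t" "x = t ! i" by (metis in_set_conv_nth)
    then show "x \<in> last p" using eqi pt(4) len nth_mem by (metis subsetD)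
  qed
  moreover have "\<forall>x\<in>set t. \<alpha> x = cls K p x"
  proof
    fix x assume "x \<in> set t"
    then obtain i where i: "i < length t" "x = t ! i" by (metis in_set_conv_nth)
    have "\<alpha> (t ! i) = cls K p (t ! i)" using eqi[OF i(1)] by blast
    then show "\<alpha> x = cls K p x" using i(2) by simp
  qed
  ultimately show ?thesis using pt(3) by blast
qed

lemma tuple_k: assumes t: "t \<in> rel A R" shows "finite (set t) \<and> card (set t) \<le> k"
proof -
  obtain p where p: "play K p" "set t \<subseteq> last p" using edge_aux[OF t] by blast
  have "last p \<in> set p" using p(1) unfolding play_def by simp
  then have "K (last p)" using p(1) unfolding play_def by blast
  then have "finite (last p) \<and> card (last p) \<le> k" unfolding kguarded_def by blast
  then show ?thesis using p(2) card_mono finite_subset le_trans by metis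
qed

lemma univ_guarded: "guarded g A S \<Longrightarrow> S \<subseteq> univ A"
  by (rule guarded_sub[OF wf])

lemma cls_in_univ: "fplay K s b \<Longrightarrow> cls K s b \<in> univ (Gk g k A)"
  unfolding Gk_univ by blast

lemma star_kguarded: assumes s: "play K s"
  shows "kguarded g k (Gk g k A) ((\<lambda>b. cls K s b) ` last s)"
proof -
  let ?S = "last s"
  let ?F = "(\<lambda>b. cls K s b) ` ?S"
  have "last s \<in> set s" using s unfolding play_def by simp
  then have KS: "K ?S" using s unfolding play_def by blast
  then have fin: "finite ?S" "card ?S \<le> k" and gS: "guarded g A ?S" unfolding kguarded_def by simp_all
  have finF: "finite ?F" using fin(1) by simp
  have cardF: "card ?F \<le> k" using card_image_le[OF fin(1), of "\<lambda>b. cls K s b"] fin(2) by simp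
  have fpS: "fplay K s b" if "b \<in> ?S" for b using s that unfolding fplay_def by simp
  have Fu: "?F \<subseteq> univ (Gk g k A)" using cls_in_univ fpS by blast
  have "guarded g (Gk g k A) ?F"
  proof (cases g)
    case AtomG
    then have "atom_guarded A ?S" using gS by simp
    then consider (sing) a0 where "a0 \<in> univ A" "?S = {a0}" | (tup) R t where "t \<in> rel A R" "?S = set t"
      unfolding atom_guarded_def by blast
    then have "atom_guarded (Gk g k A) ?F"
    proof cases
      case sing
      then have "?F = {cls K s a0}" by simp
      moreover have "cls K s a0 \<in> univ (Gk g k A)" using Fu sing by simp
      ultimately show ?thesis unfolding atom_guarded_def by blast
    next
      case tup
      then have "map (cls K s) t \<in> rel (Gk g k A) R" using Gk_relI[OF tup(1) s] by simp
      moreover have "?F = set (map (cls K s) t)" using tup by simp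
      ultimately show ?thesis unfolding atom_guarded_def by blast
    qed
    then show ?thesis using AtomG by simp
  next
    case LooseG
    then have lS: "loose_guarded A ?S" using gS by simp
    have "loose_guarded (Gk g k A) ?F"
      unfolding loose_guarded_def
    proof (intro conjI ballI)
      show "?F \<subseteq> univ (Gk g k A)" using Fu .
      fix x y assume xy: "x \<in> ?F" "y \<in> ?F"
      then obtain a1 a2 where a12: "a1 \<in> ?S" "a2 \<in> ?S" "x = cls K s a1" "y = cls K s a2" by blast
      obtain T where T: "atom_guarded A T" "{a1, a2} \<subseteq> T" using lS a12 unfolding loose_guarded_def by blast
      then consider (sing) a0 where "a0 \<in> univ A" "T = {a0}" | (tup) R t where "t \<in> rel A R" "T = set t"
        unfolding atom_guarded_def by blast
      then show "\<exists>T. atom_guarded (Gk g k A) T \<and> {x, y} \<subseteq> T"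
      proof cases
        case sing
        then have "x = y" using a12 T by auto
        moreover have "x \<in> univ (Gk g k A)" using Fu xy by blast
        ultimately have "atom_guarded (Gk g k A) {x} \<and> {x, y} \<subseteq> {x}" unfolding atom_guarded_def by blast
        then show ?thesis by blast
      next
        case tup
        let ?s' = "s @ [set t]"
        have tk: "finite (set t) \<and> card (set t) \<le> k" using tuple_k[OF tup(1)] .
        have tuu: "set t \<subseteq> univ A" using wf tup(1) unfolding wf_struc_def by blast
        have "atom_guarded A (set t)" using tup(1) unfolding atom_guarded_def by blast
        then have "loose_guarded A (set t)" using tuu unfolding loose_guarded_def by blast
        then have "guarded g A (set t)" using LooseG by simp
        then have "K (set t)" using tk unfolding kguarded_def by simp
        then have ps': "play K ?s'" using s unfolding play_def by simp
        have same: "cls K ?s' a = cls K s a" if "a \<in> ?S" "a \<in> set t" for a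
        proof -
          have sne: "s \<noteq> []" using s unfolding play_def by simp
          have c1: "cont a s s" using cont_refl[OF sne that(1)] .
          have "cont a s ?s'"
            unfolding cont_nth
          proof (intro conjI allI impI)
            show "s \<noteq> []" using sne .
            show "prefix s ?s'" by simp
            fix i assume i: "length s - 1 \<le> i \<and> i < length ?s'"
            show "a \<in> ?s' ! i"
            proof (cases "i < length s")
              case True
              then have "i = length s - 1" using i by simp
              then have "?s' ! i = s ! (length s - 1)" using True by (simp add: nth_append)
              also have "\<dots> = last s" using sne by (simp add: last_conv_nth)
              finally show ?thesis using that(1) by simp
            next
              case False
              then have "i = length s" using i by simp
              then show ?thesis using that(2) by simp
            qed
          qed
          then have "peq ?s' a s a" unfolding peq_iff using c1 by (intro conjI exI[of _ s]) simp_all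
          then show ?thesis by (rule cls_eq)
        qed
        have mem: "map (cls K ?s') t \<in> rel (Gk g k A) R" using Gk_relI[OF tup(1) ps'] by simp
        have "x \<in> set (map (cls K ?s') t)" using same[of a1] a12 T tup by auto
        moreover have "y \<in> set (map (cls K ?s') t)" using same[of a2] a12 T tup by auto
        moreover have "atom_guarded (Gk g k A) (set (map (cls K ?s') t))" using mem unfolding atom_guarded_def by blast
        ultimately show ?thesis by blast
      qed
    qed
    then show ?thesis using LooseG by simp
  qed
  then show ?thesis unfolding kguarded_def[of g k "Gk g k A"] using finF cardF by blast
qed

lemma VC: assumes c: "c \<in> univ A" and q: "prefix q (\<tau> c)" "q \<noteq> []" and b: "b \<in> last q"
  shows "b \<in> univ A \<and> \<alpha> b = cls K q b"
proof -
  let ?KK = "kguarded g k (Gk g k A)"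
  define p where "p = pa c"
  have R0: "(SOME y. y \<in> \<alpha> c) = (p, c) \<and> fplay K p c \<and> \<alpha> c = cls K p c"
    using rep[OF c] unfolding p_def .
  have R: "(SOME y. y \<in> \<alpha> c) = (p, c)" "fplay K p c" "\<alpha> c = cls K p c"
    using R0[THEN conjunct1] R0[THEN conjunct2, THEN conjunct1] R0[THEN conjunct2, THEN conjunct2] by - assumption+
  have pK: "play K p" using R(2) unfolding fplay_def by simp
  have pne: "p \<noteq> []" using pK unfolding play_def by simp
  define P where "P = map ((`) \<alpha>) p"
  define Ps where "Ps = map (\<lambda>i. (\<lambda>b. cls K (take i p) b) ` last (take i p)) [1..<Suc (length p)]"
  have lenP: "length P = length p" "length Ps = length p" unfolding P_def Ps_def by (simp_all del: upt_Suc)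
  have Psn: "Ps ! i = (\<lambda>b. cls K (take (Suc i) p) b) ` (p ! i)" if "i < length p" for i
  proof -
    have "Ps ! i = (\<lambda>b. cls K (take (Suc i) p) b) ` last (take (Suc i) p)"
      unfolding Ps_def using that by (simp del: upt_Suc)
    then show ?thesis using last_take_Suc[OF that] by simp
  qed
  have Psn2: "Ps ! i = (\<lambda>b. cls K (take (Suc i) p) b) ` last (take (Suc i) p)" if "i < length p" for i
    using Psn[OF that] last_take_Suc[OF that] by simp
  have Pn: "P ! i = \<alpha> ` (p ! i)" if "i < length p" for i using that unfolding P_def by simp
  have "Gmap g k (Gk g k A) \<alpha> (\<alpha> c) = cls ?KK P (\<alpha> c)"
    unfolding Gmap_def Let_def R(1) P_def by simp
  moreover have "delta g k A (\<alpha> c) = cls ?KK Ps (\<alpha> c)"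
    unfolding delta_def Let_def R(1) Ps_def using R(3) by simp
  ultimately have eqc: "cls ?KK P (\<alpha> c) = cls ?KK Ps (\<alpha> c)" using C3[OF c] by simp
  have playPs: "play ?KK Ps"
    unfolding play_def
  proof (intro conjI ballI)
    show "Ps \<noteq> []" using lenP pne by auto
    fix S assume "S \<in> set Ps"
    then obtain i where i: "i < length Ps" "S = Ps ! i" by (metis in_set_conv_nth)
    have ip: "i < length p" using i lenP by simp
    have "take (Suc i) p \<noteq> []" using pne by (cases p) simp_all
    then have "play K (take (Suc i) p)" using play_prefix[OF pK take_is_prefix] by blast
    then have "?KK ((\<lambda>b. cls K (take (Suc i) p) b) ` last (take (Suc i) p))" by (rule star_kguarded)
    then show "?KK S" using i(2) Psn2[OF ip] by simp
  qed
  have Psne: "Ps \<noteq> []" using lenP pne by auto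
  have "last Ps = Ps ! (length Ps - 1)" using Psne by (rule last_conv_nth)
  then have "last Ps = Ps ! (length p - 1)" using lenP by simp
  also have "\<dots> = (\<lambda>b. cls K (take (Suc (length p - 1)) p) b) ` last (take (Suc (length p - 1)) p)"
    using Psn2 pne by simp
  also have "\<dots> = (\<lambda>b. cls K p b) ` last p" using pne by simp
  finally have "\<alpha> c \<in> last Ps" using R(2,3) unfolding fplay_def by simp
  then have "fplay ?KK Ps (\<alpha> c)" using playPs unfolding fplay_def by simp
  then have "(Ps, \<alpha> c) \<in> cls ?KK Ps (\<alpha> c)" by (rule cls_self)
  then have "(Ps, \<alpha> c) \<in> cls ?KK P (\<alpha> c)" using eqc by simp
  then have "peq P (\<alpha> c) Ps (\<alpha> c)" unfolding cls_def by simp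
  then obtain r where r: "cont (\<alpha> c) r P" "cont (\<alpha> c) r Ps" unfolding peq_iff by blast
  define j where "j = length r"
  have rne: "r \<noteq> []" using r(1) unfolding cont_def by simp
  have rP: "prefix r P" "prefix r Ps" using r unfolding cont_def by simp_all
  have j1: "1 \<le> j" unfolding j_def using rne by (cases r) simp_all
  have jn: "j \<le> length p" unfolding j_def using prefix_length_le[OF rP(1)] lenP by simp
  have tkP: "take j P = take j Ps" using prefix_take_len[OF rP(1)] prefix_take_len[OF rP(2)] unfolding j_def by simp
  have "\<alpha> c \<in> Ps ! (j - 1)" using r(2) j1 jn lenP unfolding cont_nth j_def by simp
  then have "\<alpha> c \<in> (\<lambda>b. cls K (take j p) b) ` last (take j p)" using Psn2[of "j - 1"] j1 jn by simp
  then obtain c' where c': "c' \<in> last (take j p)" "\<alpha> c = cls K (take j p) c'" by blast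
  have tjne: "take j p \<noteq> []" using j1 pne by (cases p) simp_all
  have tjK: "play K (take j p)" using play_prefix[OF pK take_is_prefix tjne] .
  have fc': "fplay K (take j p) c'" using tjK c'(1) unfolding fplay_def by simp
  have "c = eps (\<alpha> c)" using C2[OF c] by simp
  also have "\<dots> = c'" unfolding c'(2) by (rule eps_cls[OF fc'])
  finally have cc': "c = c'" .
  have "cont c (\<tau> c) (take j p)" using tau_min2[OF c] fc' c'(2) cc' by simp
  then have tj: "prefix (\<tau> c) (take j p)" unfolding cont_def by simp
  define l where "l = length q"
  have qj: "prefix q (take j p)" using prefix_order.trans[OF q(1) tj] .
  have qp: "prefix q p" using prefix_order.trans[OF qj take_is_prefix] .
  have l1: "1 \<le> l" unfolding l_def using q(2) by (cases q) simp_all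
  have lj: "l \<le> j" unfolding l_def using prefix_length_le[OF qj] jn by simp
  have qtake: "q = take l p" unfolding l_def by (rule prefix_take_len[OF qp])
  have lq: "last q = p ! (l - 1)" unfolding l_def by (rule prefix_last_nth[OF qp q(2)])
  have lp: "l - 1 < length p" using lj jn l1 by simp
  have "P ! (l - 1) = take j P ! (l - 1)" using lj l1 by simp
  also have "\<dots> = take j Ps ! (l - 1)" using tkP by simp
  also have "\<dots> = Ps ! (l - 1)" using lj l1 by simp
  finally have "\<alpha> ` (p ! (l - 1)) = (\<lambda>b. cls K (take (Suc (l - 1)) p) b) ` (p ! (l - 1))"
    using Pn[OF lp] Psn[OF lp] by simp
  moreover have "take (Suc (l - 1)) p = q" using qtake l1 by simp
  ultimately have img: "\<alpha> ` last q = (\<lambda>b. cls K q b) ` last q" using lq by simp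
  have qK: "play K q" using play_prefix[OF pK qp q(2)] .
  have "K (last q)" using qK unfolding play_def by (simp add: q(2))
  then have "last q \<subseteq> univ A" using univ_guarded unfolding kguarded_def by blast
  then have bu: "b \<in> univ A" using b by blast
  have "\<alpha> b \<in> (\<lambda>b. cls K q b) ` last q" using img b by blast
  then obtain b' where b': "b' \<in> last q" "\<alpha> b = cls K q b'" by blast
  have fb': "fplay K q b'" using qK b'(1) unfolding fplay_def by simp
  have "b = eps (\<alpha> b)" using C2[OF bu] by simp
  also have "\<dots> = b'" unfolding b'(2) by (rule eps_cls[OF fb'])
  finally show ?thesis using bu b' by simp
qed

lemma fplay_q: assumes c: "c \<in> univ A" and q: "prefix q (\<tau> c)" "q \<noteq> []" and b: "b \<in> last q"
  shows "fplay K q b"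
proof -
  have "prefix q (pa c)" using prefix_order.trans[OF q(1) tau_prefix[OF c]] .
  then have "play K q" by (rule kplay_prefix[OF c _ q(2)])
  then show ?thesis using b unfolding fplay_def by simp
qed

lemma G1: "a \<in> univ A \<Longrightarrow> play (guarded g A) (\<tau> a)"
  by (rule kplay_gplay[OF kplay_tau])

lemma G2: "a \<in> univ A \<Longrightarrow> a \<in> last (\<tau> a)"
  by (rule cont_last[OF tau_cont])

lemma G3: assumes a: "a \<in> univ A" and b: "b \<in> univ A" and adj: "gaifman_adj A a b"
  shows "\<exists>p\<in>\<tau> ` univ A. {a, b} \<subseteq> last p"
proof -
  obtain R t where t: "t \<in> rel A R" "a \<in> set t" "b \<in> set t" using adj unfolding gaifman_adj_def by blast
  obtain p where p: "play K p" "set t \<subseteq> last p" "\<forall>x\<in>set t. \<alpha> x = cls K p x" using edge_aux[OF t(1)] by blast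
  have fa: "fplay K p a" using p t unfolding fplay_def by blast
  have fb: "fplay K p b" using p t unfolding fplay_def by blast
  have ca: "cont a (\<tau> a) p" using tau_min2[OF a fa] p(3) t(2) by blast
  have cb: "cont b (\<tau> b) p" using tau_min2[OF b fb] p(3) t(3) by blast
  have pa: "prefix (\<tau> a) p" using ca unfolding cont_def by simp
  have pb: "prefix (\<tau> b) p" using cb unfolding cont_def by simp
  have "prefix (\<tau> a) (\<tau> b) \<or> prefix (\<tau> b) (\<tau> a)" using prefix_same_cases[OF pa pb] .
  then show ?thesis
  proof
    assume h: "prefix (\<tau> a) (\<tau> b)"
    have "a \<in> last (\<tau> b)" using cont_mem2[OF ca h pb tau_ne[OF b]] .
    then have "{a, b} \<subseteq> last (\<tau> b)" using G2[OF b] by blast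
    then show ?thesis using b by blast
  next
    assume h: "prefix (\<tau> b) (\<tau> a)"
    have "b \<in> last (\<tau> a)" using cont_mem2[OF cb h pa tau_ne[OF a]] .
    then have "{a, b} \<subseteq> last (\<tau> a)" using G2[OF a] by blast
    then show ?thesis using a by blast
  qed
qed

lemma G4: assumes a: "a \<in> univ A" and fq: "fplay (guarded g A) q a"
  and eq: "cls (guarded g A) (\<tau> a) a = cls (guarded g A) q a"
  shows "prefix (\<tau> a) q"
proof -
  have pe1: "peq (\<tau> a) a q a" using cls_eqD[OF eq fq] .
  have pe0: "peq (pa a) a (\<tau> a) a" using peq_sym[OF peq_of_cont[OF tau_cont[OF a]]] .
  have "peq (pa a) a q a" using peq_trans[OF pe0 pe1] .
  then have "cont a (\<tau> a) q" by (rule tau_min[OF a])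
  then show ?thesis unfolding cont_def by simp
qed

lemma G5: assumes b: "b \<in> univ A" and p: "p \<in> \<tau> ` univ A" and q: "prefix q p" "q \<noteq> []" and bq: "b \<in> last q"
  shows "cls (guarded g A) (\<tau> b) b = cls (guarded g A) q b"
proof -
  obtain c where c: "c \<in> univ A" "p = \<tau> c" using p by blast
  have q': "prefix q (\<tau> c)" using q(1) c(2) by simp
  have e: "\<alpha> b = cls K q b" using VC[OF c(1) q' q(2) bq] by blast
  have f: "fplay K q b" using fplay_q[OF c(1) q' q(2) bq] .
  have "cont b (\<tau> b) q" using tau_min2[OF b f e] .
  then have "peq (\<tau> b) b q b" by (rule peq_of_cont)
  then show ?thesis by (rule cls_eq)
qed

lemma decomp: "guarded_decomp g A \<tau>"
  unfolding guarded_decomp_def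
proof (intro conjI ballI allI impI)
  fix a assume a: "a \<in> univ A"
  show "play (guarded g A) (\<tau> a)" using G1[OF a] .
  show "a \<in> last (\<tau> a)" using G2[OF a] .
next
  fix a b assume "a \<in> univ A" "b \<in> univ A" "gaifman_adj A a b"
  then show "\<exists>p\<in>\<tau> ` univ A. {a, b} \<subseteq> last p" by (rule G3)
next
  fix a q assume "a \<in> univ A" "fplay (guarded g A) q a \<and> cls (guarded g A) (\<tau> a) a = cls (guarded g A) q a"
  then show "prefix (\<tau> a) q" using G4 by blast
next
  fix a q p assume "a \<in> univ A" "p \<in> \<tau> ` univ A \<and> prefix q p \<and> q \<noteq> [] \<and> a \<in> last q"
  then show "cls (guarded g A) (\<tau> a) a = cls (guarded g A) q a" using G5 by blast
qed

lemma bounded: "k_bounded k A \<tau>"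
  unfolding k_bounded_def
proof
  fix p assume "p \<in> \<tau> ` univ A"
  then obtain a where a: "a \<in> univ A" "p = \<tau> a" by blast
  have pK: "play K p" using kplay_tau[OF a(1)] a(2) by simp
  then have "last p \<in> set p" unfolding play_def by simp
  then have "K (last p)" using pK unfolding play_def by blast
  then show "finite (last p) \<and> card (last p) \<le> k" unfolding kguarded_def by simp
qed

end

lemma coalg_to_dec: "wf_struc ar A \<Longrightarrow> coalgebra g k A \<alpha> \<Longrightarrow> \<exists>\<tau>. guarded_decomp g A \<tau> \<and> k_bounded k A \<tau>"
  using coal.decomp coal.bounded coal.intro by blast

theorem theorem4p14:
  fixes g :: guarding and ar :: "'r \<Rightarrow> nat" and A :: "('a, 'r) struc"
  assumes "wf_struc ar A"
  shows "guarded_treewidth g A = coalgebra_number g A"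
proof -
  have "(\<exists>\<tau>. guarded_decomp g A \<tau> \<and> k_bounded k A \<tau>) \<longleftrightarrow> (\<exists>\<alpha>. coalgebra g k A \<alpha>)" for k
    using dec_to_coalg[OF assms] coalg_to_dec[OF assms] by blast
  then show ?thesis unfolding guarded_treewidth_def coalgebra_number_def by simp
qed

end
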